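(* Let $\mathbf{K}$ be a field of characteristic different from $2$ and let $A$ be a (not necessarily associative) algebra over $\mathbf{K}$. For $a,b,c\in A$ put $\langle a,b,c\rangle=(ab)c-a(bc)+b(ac)$. Then $A$ is a unary Leibniz algebra if and only if $A$ satisfies the identities $$\langle a,a,a\rangle=0 \quad\text{and}\quad \langle aa,a,a\rangle=0 \qquad\text{for all } a\in A.$$
   Context: A (left) Leibniz algebra is an algebra satisfying $(ab)c=a(bc)-b(ac)$ for all $a,b,c$, i.e. $\langle a,b,c\rangle=0$. An algebra $A$ is called a unary Leibniz algebra if every subalgebra of $A$ generated by a single element is a Leibniz algebra. *)

theory Defs
  imports Main "HOL.Vector_Spaces"
begin

definition nonassoc_algebra ::
  "('k::field \<Rightarrow> 'v::ab_group_add \<Rightarrow> 'v) \<Rightarrow> ('v \<Rightarrow> 'v \<Rightarrow> 'v) \<Rightarrow> bool" where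
  "nonassoc_algebra scale mult \<longleftrightarrow>
     vector_space scale \<and>
     (\<forall>x y z. mult (x + y) z = mult x z + mult y z) \<and>
     (\<forall>x y z. mult x (y + z) = mult x y + mult x z) \<and>
     (\<forall>c x y. mult (scale c x) y = scale c (mult x y)) \<and>
     (\<forall>c x y. mult x (scale c y) = scale c (mult x y))"

definition lassoc :: "('v::ab_group_add \<Rightarrow> 'v \<Rightarrow> 'v) \<Rightarrow> 'v \<Rightarrow> 'v \<Rightarrow> 'v \<Rightarrow> 'v" where
  "lassoc mult a b c = mult (mult a b) c - mult a (mult b c) + mult b (mult a c)"

inductive_set gen_subalg ::
  "('k::field \<Rightarrow> 'v::ab_group_add \<Rightarrow> 'v) \<Rightarrow> ('v \<Rightarrow> 'v \<Rightarrow> 'v) \<Rightarrow> 'v \<Rightarrow> 'v set"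
  for scale mult a where
  gen: "a \<in> gen_subalg scale mult a"
| zero: "0 \<in> gen_subalg scale mult a"
| add: "x \<in> gen_subalg scale mult a \<Longrightarrow> y \<in> gen_subalg scale mult a \<Longrightarrow> x + y \<in> gen_subalg scale mult a"
| smul: "x \<in> gen_subalg scale mult a \<Longrightarrow> scale c x \<in> gen_subalg scale mult a"
| mul: "x \<in> gen_subalg scale mult a \<Longrightarrow> y \<in> gen_subalg scale mult a \<Longrightarrow> mult x y \<in> gen_subalg scale mult a"

definition leibniz_on :: "'v set \<Rightarrow> ('v::ab_group_add \<Rightarrow> 'v \<Rightarrow> 'v) \<Rightarrow> bool" where
  "leibniz_on S mult \<longleftrightarrow> (\<forall>x\<in>S. \<forall>y\<in>S. \<forall>z\<in>S. lassoc mult x y z = 0)"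

definition unary_leibniz ::
  "('k::field \<Rightarrow> 'v::ab_group_add \<Rightarrow> 'v) \<Rightarrow> ('v \<Rightarrow> 'v \<Rightarrow> 'v) \<Rightarrow> bool" where
  "unary_leibniz scale mult \<longleftrightarrow> (\<forall>a. leibniz_on (gen_subalg scale mult a) mult)"

end

theory Submission
  imports Defs
begin

primrec pw :: "('v \<Rightarrow> 'v \<Rightarrow> 'v) \<Rightarrow> 'v \<Rightarrow> nat \<Rightarrow> 'v" where
  "pw m a 0 = a"
| "pw m a (Suc k) = m a (pw m a k)"

declare pw.simps(2)[simp del]

inductive_set spn :: "('k::field \<Rightarrow> 'v::ab_group_add \<Rightarrow> 'v) \<Rightarrow> ('v \<Rightarrow> 'v \<Rightarrow> 'v) \<Rightarrow> 'v \<Rightarrow> 'v set"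
  for scale m a where
  sb: "pw m a k \<in> spn scale m a"
| sz: "0 \<in> spn scale m a"
| sa: "x \<in> spn scale m a \<Longrightarrow> y \<in> spn scale m a \<Longrightarrow> x + y \<in> spn scale m a"
| ss: "x \<in> spn scale m a \<Longrightarrow> scale c x \<in> spn scale m a"

locale nalg =
  fixes scale :: "'k::field \<Rightarrow> 'v::ab_group_add \<Rightarrow> 'v"
    and m :: "'v \<Rightarrow> 'v \<Rightarrow> 'v"
  assumes vs: "vector_space scale"
    and ladd: "m (x + y) z = m x z + m y z"
    and radd: "m x (y + z) = m x y + m x z"
    and lsc: "m (scale c x) y = scale c (m x y)"
    and rsc: "m x (scale c y) = scale c (m x y)"
    and two: "(2::'k) \<noteq> 0"
begin

lemma lzero[simp]: "m 0 y = 0"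
  using ladd[of 0 0 y] by simp
lemma rzero[simp]: "m y 0 = 0"
  using radd[of y 0 0] by simp
lemma lneg[simp]: "m (- x) y = - m x y"
proof -
  have "m x y + m (-x) y = 0" using ladd[of x "-x" y] by simp
  thus ?thesis by (metis add.inverse_unique)
qed
lemma rneg[simp]: "m y (- x) = - m y x"
proof -
  have "m y x + m y (-x) = 0" using radd[of y x "-x"] by simp
  thus ?thesis by (metis add.inverse_unique)
qed
lemma ldiff: "m (x - y) z = m x z - m y z"
  using ladd[of x "-y" z] by simp
lemma rdiff: "m z (x - y) = m z x - m z y"
  using radd[of z x "-y"] by simp

lemma half: fixes v :: 'v assumes "v + v = 0" shows "v = 0"
proof -
  interpret vector_space scale by (rule vs)
  have e: "inverse 2 + inverse 2 = (1::'k)"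
    using two by (metis mult_2 right_inverse)
  have "v = scale 1 v" by simp
  also have "\<dots> = scale (inverse 2 + inverse 2) v" by (simp only: e)
  also have "\<dots> = scale (inverse 2) v + scale (inverse 2) v" by (rule scale_left_distrib)
  also have "\<dots> = scale (inverse 2) (v + v)" by (rule scale_right_distrib[symmetric])
  also have "\<dots> = 0" using assms by simp
  finally show ?thesis .
qed

end

locale nalg2 = nalg +
  assumes f0: "m (m x x) x = 0"
    and g0: "m (m x x) (m x x) = 0"
begin

definition P where "P x y = m (m x y + m y x) x + m (m x x) y"

lemma exP1: "m (m (x+y) (x+y)) (x+y) = m (m x x) x + m (m y y) y + P x y + P y x"
  by (simp add: P_def ladd radd algebra_simps)
lemma exP2: "m (m (x-y) (x-y)) (x-y) = m (m x x) x - m (m y y) y - P x y + P y x"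
  by (simp add: P_def ladd radd ldiff rdiff algebra_simps)

lemma P0: "P x y = 0"
proof -
  have h1: "P x y + P y x = 0"
    using f0[of "x+y"] f0[of x] f0[of y] exP1[of x y] by simp
  have h2: "P y x - P x y = 0"
    using f0[of "x-y"] f0[of x] f0[of y] exP2[of x y] by simp
  have "P y x + P y x = (P x y + P y x) + (P y x - P x y)" by (simp add: algebra_simps)
  then have "P y x + P y x = 0" using h1 h2 by simp
  then have "P y x = 0" by (rule half)
  then show ?thesis using h1 by simp
qed

definition S where "S x y z = m (m x y) z + m (m y x) z + m (m x z) y + m (m z x) y + m (m y z) x + m (m z y) x"

lemma exS: "P (x+z) y = P x y + P z y + S x y z"
  by (simp add: P_def S_def ladd radd algebra_simps)

lemma S0: "S x y z = 0"
  using exS[of x z y] P0[of "x+z" y] P0[of x y] P0[of z y] by simp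

definition D22 where "D22 x y = m (m x x) (m y y) + m (m y y) (m x x) + m (m x y + m y x) (m x y + m y x)"
definition D31 where "D31 x y = m (m x x) (m x y + m y x) + m (m x y + m y x) (m x x) + m (m y y) (m x y + m y x) + m (m x y + m y x) (m y y)"

lemma exG1: "m (m (x+y) (x+y)) (m (x+y) (x+y)) = m (m x x) (m x x) + m (m y y) (m y y) + D22 x y + D31 x y"
  by (simp add: D22_def D31_def ladd radd algebra_simps)
lemma exG2: "m (m (x-y) (x-y)) (m (x-y) (x-y)) = m (m x x) (m x x) + m (m y y) (m y y) + D22 x y - D31 x y"
  by (simp add: D22_def D31_def ladd radd ldiff rdiff algebra_simps)

lemma D22_0: "D22 x y = 0" and D31_0: "D31 x y = 0"
proof -
  have h1: "D22 x y + D31 x y = 0"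
    using g0[of "x+y"] g0[of x] g0[of y] exG1[of x y] by simp
  have h2: "D22 x y - D31 x y = 0"
    using g0[of "x-y"] g0[of x] g0[of y] exG2[of x y] by simp
  have "D22 x y + D22 x y = (D22 x y + D31 x y) + (D22 x y - D31 x y)" by (simp add: algebra_simps)
  then have "D22 x y + D22 x y = 0" using h1 h2 by simp
  then show "D22 x y = 0" by (rule half)
  then show "D31 x y = 0" using h1 by simp
qed

definition Dp where "Dp x y z = m (m x x) (m y z + m z y) + m (m y z + m z y) (m x x) + m (m x y + m y x) (m x z + m z x) + m (m x z + m z x) (m x y + m y x)"

lemma exDp: "D22 x (y+z) = D22 x y + D22 x z + Dp x y z"
  by (simp add: D22_def Dp_def ladd radd algebra_simps)

lemma Dp0: "Dp x y z = 0"
  using exDp[of x y z] D22_0[of x "y+z"] D22_0[of x y] D22_0[of x z] by simp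

abbreviation E where "E a k \<equiv> pw m a k"

lemma RA: "m (E a (Suc q)) a + m (m (E a q) a) a + m (E a 1) (E a q) = 0"
  using P0[of a "E a q"] by (simp add: P_def ladd pw.simps)

lemma RB: "m (E a (Suc p)) (E a q) + m (m (E a p) a) (E a q) + m (E a (Suc q)) (E a p)
   + m (m (E a q) a) (E a p) + m (m (E a p) (E a q)) a + m (m (E a q) (E a p)) a = 0"
  using S0[of a "E a p" "E a q"] by (simp add: S_def algebra_simps pw.simps)

lemma RC: "m (E a 1) (m (E a p) (E a q) + m (E a q) (E a p)) + m (m (E a p) (E a q) + m (E a q) (E a p)) (E a 1)
  + m (E a (Suc p) + m (E a p) a) (E a (Suc q) + m (E a q) a) + m (E a (Suc q) + m (E a q) a) (E a (Suc p) + m (E a p) a) = 0"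
  using Dp0[of a "E a p" "E a q"] by (simp add: Dp_def pw.simps)

lemma RD: "m (E a p) (E a p) = 0 \<Longrightarrow> m (E a 1) (E a (Suc p) + m (E a p) a) + m (E a (Suc p) + m (E a p) a) (E a 1) = 0"
  using D31_0[of a "E a p"] by (simp add: D31_def pw.simps)

lemma RSq: "m (E a 1) (m (E a p) (E a p)) + m (m (E a p) (E a p)) (E a 1) + m (E a (Suc p) + m (E a p) a) (E a (Suc p) + m (E a p) a) = 0"
  using D22_0[of a "E a p"] by (simp add: D22_def pw.simps)

lemma sq: "1 \<le> p \<Longrightarrow> (\<forall>q. 1 \<le> q \<longrightarrow> q < p \<longrightarrow> m (E a q) a = 0) \<Longrightarrow> m (E a p) (E a p) = 0"
proof (induction p)
  case 0
  then show ?case by simp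
next
  case (Suc p)
  show ?case
  proof (cases "p = 0")
    case True
    then show ?thesis using g0[of a] by (simp add: pw.simps)
  next
    case False
    then have h1: "m (E a p) a = 0" using Suc.prems by simp
    have h2: "m (E a p) (E a p) = 0" using Suc False by simp
    show ?thesis using RSq[of a p] h1 h2 by simp
  qed
qed

lemma level:
  assumes IH: "\<And>i j. 1 \<le> i \<Longrightarrow> i + j < N \<Longrightarrow> m (E a i) (E a j) = 0"
  shows "1 \<le> i \<Longrightarrow> i + j = N \<Longrightarrow> m (E a i) (E a j) = 0"
proof -
  have zero: "m (E a i) a = 0" if "1 \<le> i" "i < N" for i
    using IH[of i 0] that by simp
  have shift: "m (E a (Suc (Suc r))) (E a j) = m (E a (Suc r)) (E a (Suc j))"
    if "1 \<le> r" "1 \<le> j" "Suc (Suc r) + j = N" for r j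
  proof -
    have z1: "m (E a (Suc r)) a = 0" "m (E a j) a = 0" "m (E a (Suc r)) (E a j) = 0"
       "m (E a j) (E a (Suc r)) = 0" "m (E a j) (E a r) = 0" "m (E a r) (E a j) = 0" "m (E a r) a = 0"
      using zero IH that by auto
    have hb: "m (E a (Suc (Suc r))) (E a j) + m (E a (Suc j)) (E a (Suc r)) = 0"
      using RB[of a "Suc r" j] z1 by simp
    have hc: "m (E a (Suc j)) (E a (Suc r)) + m (E a (Suc r)) (E a (Suc j)) = 0"
      using RC[of a j r] z1 by simp
    from hb hc show ?thesis by (metis add.inverse_unique add.commute)
  qed
  have chain: "m (E a (Suc (Suc d))) (E a j) = m (E a 2) (E a (d + j))"
    if "Suc (Suc d) + j = N" "1 \<le> j" for d j
    using that
  proof (induction d arbitrary: j)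
    case 0
    then show ?case by (simp add: numeral_2_eq_2)
  next
    case (Suc d)
    have "m (E a (Suc (Suc (Suc d)))) (E a j) = m (E a (Suc (Suc d))) (E a (Suc j))"
      using shift[of "Suc d" j] Suc.prems by simp
    also have "\<dots> = m (E a 2) (E a (d + Suc j))"
      using Suc.IH[of "Suc j"] Suc.prems by simp
    finally show ?case by simp
  qed
  have case1: "m (E a i) (E a j) = 0" if "2 \<le> i" "1 \<le> j" "i + j = N" for i j
  proof -
    define t where "t = N - 2"
    have t: "N = Suc (Suc t)" "1 \<le> t" using that unfolding t_def by auto
    have z1: "m (E a 1) a = 0" "m (E a t) a = 0" "m (E a 1) (E a t) = 0" "m (E a t) (E a 1) = 0"
      using zero IH t by auto
    have hb: "m (E a 2) (E a t) + m (E a (Suc t)) (E a 1) = 0"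
      using RB[of a 1 t] z1 by (simp add: numeral_2_eq_2)
    define d where "d = t - 1"
    have d: "t = Suc d" using t unfolding d_def by auto
    have "m (E a (Suc t)) (E a 1) = m (E a 2) (E a t)"
      using chain[of d 1] t d by simp
    then have "m (E a 2) (E a t) + m (E a 2) (E a t) = 0" using hb by simp
    then have c0: "m (E a 2) (E a t) = 0" by (rule half)
    define d' where "d' = i - 2"
    have d': "i = Suc (Suc d')" using that unfolding d'_def by auto
    have "m (E a i) (E a j) = m (E a 2) (E a (d' + j))" using chain[of d' j] d' that by simp
    also have "d' + j = t" using d' that t by simp
    finally show ?thesis using c0 by simp
  qed
  have case2: "m (E a 1) (E a j) = 0" if "1 + j = N" for j
  proof (cases j)
    case 0
    then show ?thesis using f0[of a] by (simp add: pw.simps)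
  next
    case (Suc p)
    show ?thesis
    proof (cases p)
      case 0
      then show ?thesis using g0[of a] Suc by (simp add: pw.simps)
    next
      case (Suc p')
      have p1: "1 \<le> p" using Suc by simp
      have sqp: "m (E a p) (E a p) = 0"
        using sq[of p a] p1 zero \<open>j = Suc p\<close> that by simp
      have zp: "m (E a p) a = 0" using zero p1 \<open>j = Suc p\<close> that by simp
      have "m (E a 1) (E a j) + m (E a j) (E a 1) = 0"
        using RD[OF sqp] zp \<open>j = Suc p\<close> by simp
      moreover have "m (E a j) (E a 1) = 0"
        using case1[of j 1] Suc \<open>j = Suc p\<close> that by simp
      ultimately show ?thesis by simp
    qed
  qed
  have case3: "m (E a i) a = 0" if "2 \<le> i" "i = N" for i
  proof -
    define q where "q = i - 1"
    have q: "i = Suc q" "1 \<le> q" using that unfolding q_def by auto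
    have "m (E a q) a = 0" using zero q that by simp
    moreover have "m (E a 1) (E a q) = 0" using case2[of q] q that by simp
    ultimately show ?thesis using RA[of a q] q by simp
  qed
  assume "1 \<le> i" "i + j = N"
  then show "m (E a i) (E a j) = 0"
    using case1[of i j] case2[of j] case3[of i]
    by (cases "i = 1"; cases "j = 0"; simp)
qed

lemma main: "1 \<le> i \<Longrightarrow> m (E a i) (E a j) = 0"
proof -
  have "\<forall>i j. 1 \<le> i \<longrightarrow> i + j = N \<longrightarrow> m (E a i) (E a j) = 0" for N
  proof (induction N rule: less_induct)
    case (less N)
    show ?case using level[of N a] less by blast
  qed
  moreover assume "1 \<le> i"
  ultimately show ?thesis by blast
qed

lemma L1: "y \<in> spn scale m a \<Longrightarrow> m (E a i) y \<in> spn scale m a"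
proof (induction y rule: spn.induct)
  case (sb k)
  show ?case
  proof (cases i)
    case 0
    then have "m (E a i) (E a k) = E a (Suc k)" by (simp add: pw.simps)
    then show ?thesis by (metis spn.sb)
  next
    case (Suc i')
    then have "m (E a i) (E a k) = 0" using main[of i a k] by simp
    then show ?thesis by (simp add: spn.sz)
  qed
next
  case sz
  then show ?case by (simp add: spn.sz)
next
  case (sa x y)
  then show ?case by (simp add: radd spn.sa)
next
  case (ss x c)
  then show ?case by (simp add: rsc spn.ss)
qed

lemma L2: "x \<in> spn scale m a \<Longrightarrow> y \<in> spn scale m a \<Longrightarrow> m x y \<in> spn scale m a"
proof (induction x rule: spn.induct)
  case (sb k)
  then show ?case by (rule L1)
next
  case sz
  then show ?case by (simp add: spn.sz)
next
  case (sa x1 x2)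
  then show ?case by (simp add: ladd spn.sa)
next
  case (ss x c)
  then show ?case by (simp add: lsc spn.ss)
qed

lemma G_sub: "x \<in> gen_subalg scale m a \<Longrightarrow> x \<in> spn scale m a"
proof (induction x rule: gen_subalg.induct)
  case gen
  then show ?case using spn.sb[of m a 0 scale] by simp
next
  case zero
  then show ?case by (rule spn.sz)
next
  case (add x y)
  then show ?case by (blast intro: spn.sa)
next
  case (smul x c)
  then show ?case by (blast intro: spn.ss)
next
  case (mul x y)
  then show ?case by (blast intro: L2)
qed

lemma la_add1: "lassoc m (x1 + x2) y z = lassoc m x1 y z + lassoc m x2 y z"
  by (simp add: lassoc_def ladd radd algebra_simps)
lemma la_add2: "lassoc m x (y1 + y2) z = lassoc m x y1 z + lassoc m x y2 z"
  by (simp add: lassoc_def ladd radd algebra_simps)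
lemma la_add3: "lassoc m x y (z1 + z2) = lassoc m x y z1 + lassoc m x y z2"
  by (simp add: lassoc_def ladd radd algebra_simps)
lemma la_sc1: "lassoc m (scale c x) y z = scale c (lassoc m x y z)"
proof -
  interpret vector_space scale by (rule vs)
  show ?thesis by (simp add: lassoc_def lsc rsc scale_right_diff_distrib scale_right_distrib)
qed
lemma la_sc2: "lassoc m x (scale c y) z = scale c (lassoc m x y z)"
proof -
  interpret vector_space scale by (rule vs)
  show ?thesis by (simp add: lassoc_def lsc rsc scale_right_diff_distrib scale_right_distrib)
qed
lemma la_sc3: "lassoc m x y (scale c z) = scale c (lassoc m x y z)"
proof -
  interpret vector_space scale by (rule vs)
  show ?thesis by (simp add: lassoc_def lsc rsc scale_right_diff_distrib scale_right_distrib)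
qed
lemma sc0: "scale c 0 = 0"
proof -
  interpret vector_space scale by (rule vs)
  show ?thesis by simp
qed

lemma la_basis: "lassoc m (E a i) (E a j) (E a k) = 0"
proof -
  have Es: "E a (Suc n) = m a (E a n)" for n by (simp add: pw.simps)
  show ?thesis
  proof (cases "i = 0")
    case True
    have 1: "m (m (E a i) (E a j)) (E a k) = 0"
      using True main[of "Suc j" a k] Es[of j] by simp
    show ?thesis
    proof (cases "j = 0")
      case True
      then show ?thesis using 1 \<open>i = 0\<close> by (simp add: lassoc_def)
    next
      case False
      then have "m (E a j) (E a k) = 0" "m (E a j) (E a (Suc k)) = 0" using main by auto
      then show ?thesis using 1 \<open>i = 0\<close> Es[of k] by (simp add: lassoc_def)
    qed
  next
    case False
    have 1: "m (E a i) (E a j) = 0" "m (E a i) (E a k) = 0" "m (E a i) (E a (Suc k)) = 0"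
      using False main by auto
    show ?thesis
    proof (cases "j = 0")
      case True
      then show ?thesis using 1 Es[of k] by (simp add: lassoc_def)
    next
      case False
      then have "m (E a j) (E a k) = 0" using main by auto
      then show ?thesis using 1 by (simp add: lassoc_def)
    qed
  qed
qed

lemma la_z: "lassoc m 0 y z = 0" "lassoc m x 0 z = 0" "lassoc m x y 0 = 0"
  by (simp_all add: lassoc_def)

lemma la3: "z \<in> spn scale m a \<Longrightarrow> lassoc m (E a i) (E a j) z = 0"
  by (induction z rule: spn.induct) (simp_all add: la_basis la_add3 la_sc3 sc0 la_z)

lemma la2: "y \<in> spn scale m a \<Longrightarrow> z \<in> spn scale m a \<Longrightarrow> lassoc m (E a i) y z = 0"
  by (induction y rule: spn.induct) (simp_all add: la3 la_add2 la_sc2 sc0 la_z)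

lemma la1: "x \<in> spn scale m a \<Longrightarrow> y \<in> spn scale m a \<Longrightarrow> z \<in> spn scale m a \<Longrightarrow> lassoc m x y z = 0"
  by (induction x rule: spn.induct) (simp_all add: la2 la_add1 la_sc1 sc0 la_z)

end

theorem theorem1:
  fixes scale :: "'k::field \<Rightarrow> 'v::ab_group_add \<Rightarrow> 'v"
    and mult :: "'v \<Rightarrow> 'v \<Rightarrow> 'v"
  assumes "nonassoc_algebra scale mult"
    and "(2::'k) \<noteq> 0"
  shows "unary_leibniz scale mult \<longleftrightarrow>
         (\<forall>a. lassoc mult a a a = 0 \<and> lassoc mult (mult a a) a a = 0)"
proof
  assume "unary_leibniz scale mult"
  then have L: "leibniz_on (gen_subalg scale mult a) mult" for a
    unfolding unary_leibniz_def by blast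
  show "\<forall>a. lassoc mult a a a = 0 \<and> lassoc mult (mult a a) a a = 0"
  proof
    fix a
    have a: "a \<in> gen_subalg scale mult a" by (rule gen_subalg.intros(1))
    have aa: "mult a a \<in> gen_subalg scale mult a" using a a by (rule gen_subalg.mul)
    show "lassoc mult a a a = 0 \<and> lassoc mult (mult a a) a a = 0"
      using L[of a] a aa unfolding leibniz_on_def by blast
  qed
next
  assume H: "\<forall>a. lassoc mult a a a = 0 \<and> lassoc mult (mult a a) a a = 0"
  have na: "nalg scale mult"
    using assms unfolding nonassoc_algebra_def nalg_def by auto
  interpret nalg scale mult by (rule na)
  have f: "mult (mult x x) x = 0" for x
    using H[rule_format, of x] by (simp add: lassoc_def)
  have g: "mult (mult x x) (mult x x) = 0" for x
    using H[rule_format, of x] f[of x] by (simp add: lassoc_def)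
  have na2: "nalg2 scale mult"
    unfolding nalg2_def nalg2_axioms_def using na f g by blast
  interpret nalg2 scale mult by (rule na2)
  show "unary_leibniz scale mult"
    unfolding unary_leibniz_def leibniz_on_def
    using la1 G_sub by blast
qed

end
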